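(* Let $k\ge 0$ and $m=2k+1$, and let $ER_m(\hat K)=P_m(\hat K)+\mathrm{span}\{\hat x^{m}\hat y-\hat x\hat y^{m},\ \hat x^{m+1}-\hat y^{m+1}\}$. If $\hat v\in ER_m(\hat K)$ vanishes at all points of $G\cup I$, then $\hat v\equiv 0$.
   Context: $\hat K=[-1,1]^2$; $P_m(\hat K)$ is the space of polynomials of total degree $\le m$. Let $g_{-k},\dots,g_k$ be the zeros of the Legendre polynomial of degree $2k+1$ on $[-1,1]$. $G=\{(1,g_i),(-1,g_i),(g_i,1),(g_i,-1): i=-k,\dots,k\}$. $I$ is a set of $(2k-1)(k-1)$ interior points of $\hat K$ unisolvent for $P_{2k-3}(\hat K)$ (every polynomial in $P_{2k-3}(\hat K)$ is uniquely determined by its values on $I$); $I=\emptyset$ when $k\le1$. *)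

theory Defs
  imports Complex_Main
begin

fun legendre :: "nat \<Rightarrow> real \<Rightarrow> real" where
  "legendre 0 x = 1"
| "legendre (Suc 0) x = x"
| "legendre (Suc (Suc n)) x =
     ((2 * real n + 3) * x * legendre (Suc n) x - (real n + 1) * legendre n x) / (real n + 2)"

definition polyP :: "nat \<Rightarrow> (real \<times> real \<Rightarrow> real) \<Rightarrow> bool" where
  "polyP m f \<longleftrightarrow> (\<exists>c :: nat \<Rightarrow> nat \<Rightarrow> real.
      \<forall>x y. f (x, y) = (\<Sum>i\<le>m. \<Sum>j\<le>m - i. c i j * x ^ i * y ^ j))"

definition ER :: "nat \<Rightarrow> (real \<times> real \<Rightarrow> real) \<Rightarrow> bool" where
  "ER m v \<longleftrightarrow> (\<exists>p a b. polyP m p \<and>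
      (\<forall>x y. v (x, y) = p (x, y) + a * (x ^ m * y - x * y ^ m)
                                   + b * (x ^ (m + 1) - y ^ (m + 1))))"

definition Gset :: "nat \<Rightarrow> (real \<times> real) set" where
  "Gset k = (\<Union>g \<in> {g. -1 \<le> g \<and> g \<le> 1 \<and> legendre (2 * k + 1) g = 0}.
               {(1, g), (-1, g), (g, 1), (g, -1)})"

end

theory Submission
  imports Defs "HOL-Computational_Algebra.Polynomial"
begin


fun Lp :: "nat \<Rightarrow> real poly" where
  "Lp 0 = 1"
| "Lp (Suc 0) = [:0,1:]"
| "Lp (Suc (Suc n)) = smult (1/(real n+2))
     (smult (2*real n+3) (pCons 0 (Lp (Suc n))) - smult (real n+1) (Lp n))"

lemma poly_Lp: "poly (Lp n) x = legendre n x"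
  by (induction n rule: Lp.induct) (simp_all add: field_simps)

lemma coeff_Lp_high: "n < j \<Longrightarrow> coeff (Lp n) j = 0"
proof (induction n arbitrary: j rule: Lp.induct)
  case (3 n)
  then show ?case by (cases j) auto
qed (auto simp: coeff_pCons split: nat.split)

lemma coeff_Lp_parity: "odd (n + j) \<Longrightarrow> coeff (Lp n) j = 0"
proof (induction n arbitrary: j rule: Lp.induct)
  case 1 then show ?case by (cases j) auto
next
  case 2 then show ?case by (cases j) (auto simp: coeff_pCons odd_pos split: nat.split)
next
  case (3 n)
  then show ?case by (cases j) auto
qed

lemma coeff_Lp_lead: "coeff (Lp n) n > 0"
proof (induction n rule: Lp.induct)
  case (3 n)
  have "coeff (Lp n) (Suc (Suc n)) = 0" by (rule coeff_Lp_high) simp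
  with 3 show ?case by (simp add: field_simps, smt (verit) mult_nonneg_nonneg of_nat_0_le_iff)
qed auto

lemma degree_Lp: "degree (Lp n) = n"
proof (rule antisym)
  show "degree (Lp n) \<le> n" by (rule degree_le) (auto intro: coeff_Lp_high)
  show "n \<le> degree (Lp n)" by (rule le_degree) (use coeff_Lp_lead[of n] in auto)
qed

lemma legendre_one: "legendre n 1 = 1"
  by (induction n rule: Lp.induct) (simp_all add: field_simps)

lemma legendre_neg1: "legendre n (-1) = (-1)^n"
  by (induction n rule: Lp.induct) (simp_all add: field_simps)

lemma isCont_legendre: "isCont (legendre n) x"
proof -
  have "legendre n = (\<lambda>x. poly (Lp n) x)" by (simp add: poly_Lp fun_eq_iff)
  then show ?thesis by simp
qed



lemma prod_lin_dvd:
  fixes p :: "real poly" and x :: "nat \<Rightarrow> real"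
  assumes "\<forall>i j. i < n \<longrightarrow> j < n \<longrightarrow> x i = x j \<longrightarrow> i = j"
    and "\<forall>i<n. poly p (x i) = 0"
  shows "(\<Prod>i<n. [:-x i, 1:]) dvd p"
  using assms
proof (induction n)
  case 0 then show ?case by simp
next
  case (Suc n)
  then have "(\<Prod>i<n. [:-x i, 1:]) dvd p" by auto
  then obtain q where q: "p = (\<Prod>i<n. [:-x i, 1:]) * q" by (auto elim: dvdE)
  have "poly (\<Prod>i<n. [:-x i, 1:]) (x n) = (\<Prod>i<n. x n - x i)"
    by (simp add: poly_prod)
  also have "\<dots> \<noteq> 0" using Suc.prems(1) apply auto by (metis lessI less_SucI less_irrefl_nat)
  finally have nz: "poly (\<Prod>i<n. [:-x i, 1:]) (x n) \<noteq> 0" .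
  have "poly p (x n) = 0" using Suc.prems by auto
  with nz q have "poly q (x n) = 0" by simp
  then have "[:-x n, 1:] dvd q" by (simp add: poly_eq_0_iff_dvd)
  then have "(\<Prod>i<n. [:-x i, 1:]) * [:-x n, 1:] dvd (\<Prod>i<n. [:-x i, 1:]) * q"
    by (rule mult_dvd_mono[OF dvd_refl])
  then show ?case using q by (simp only: prod.lessThan_Suc)
qed

lemma degree_prod_lin: "degree (\<Prod>i<n. [:-(x i::real), 1:]) = n"
  by (subst degree_prod_eq_sum_degree) auto

lemma lead_prod_lin: "lead_coeff (\<Prod>i<n. [:-(x i::real), 1:]) = 1"
  by (simp add: lead_coeff_prod)

lemma factor_roots:
  fixes p :: "real poly" and x :: "nat \<Rightarrow> real"
  assumes "degree p = n"
    and "\<forall>i j. i < n \<longrightarrow> j < n \<longrightarrow> x i = x j \<longrightarrow> i = j"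
    and "\<forall>i<n. poly p (x i) = 0"
  shows "p = smult (lead_coeff p) (\<Prod>i<n. [:-x i, 1:])"
proof (cases "p = 0")
  case True then show ?thesis by simp
next
  case False
  let ?P = "\<Prod>i<n. [:-x i, 1:]"
  obtain q where q: "p = ?P * q" using prod_lin_dvd[OF assms(2,3)] by (auto elim: dvdE)
  have P0: "?P \<noteq> 0" using lead_prod_lin[of x n] by auto
  have q0: "q \<noteq> 0" using False q by auto
  have "degree p = n + degree q" using q P0 q0 by (simp add: degree_mult_eq degree_prod_lin)
  then have "degree q = 0" using assms(1) by simp
  then obtain c where c: "q = [:c:]" by (metis degree_eq_zeroE)
  have "lead_coeff p = lead_coeff ?P * lead_coeff q" by (simp add: q lead_coeff_mult)
  then have "lead_coeff p = c" using c lead_prod_lin[of x n] by simp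
  moreover have "p = smult c ?P" using q c by simp
  ultimately show ?thesis by metis
qed

lemma sgn_prod_lessThan: fixes n :: nat shows "sgn (\<Prod>i<n. f i) = (\<Prod>i<n. sgn (f i :: real))"
  by (induction n) (simp_all add: sgn_mult)

lemma prod_if_sign:
  fixes n j :: nat
  shows "(\<Prod>i<n. (if i < j then 1 else -1::real)) = (-1) ^ (n - j)"
proof (induct n)
  case (Suc n)
  then show ?case by (cases "n < j") (auto simp: Suc_diff_le)
qed simp



lemma sgn_neg1_pow: "sgn ((-1::real) ^ k) = (-1) ^ k"
  by (cases "even k") simp_all

lemma ivt_sign:
  fixes f :: "real \<Rightarrow> real"
  assumes "a < b" "f a * f b < 0" "\<And>x. isCont f x"
  shows "\<exists>y. a < y \<and> y < b \<and> f y = 0"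
proof (cases "f a < 0")
  case True
  then have "f b > 0" using assms(2) by (simp add: mult_less_0_iff)
  then obtain y where "a \<le> y" "y \<le> b" "f y = 0"
    using IVT[of f a 0 b] True assms by auto
  then show ?thesis using True \<open>f b > 0\<close> by (metis less_eq_real_def less_irrefl)
next
  case False
  then have "f a > 0" "f b < 0" using assms(2) by (auto simp: mult_less_0_iff)
  then obtain y where "a \<le> y" "y \<le> b" "f y = 0"
    using IVT2[of f b 0 a] assms by auto
  then show ?thesis using \<open>f a > 0\<close> \<open>f b < 0\<close> by (metis less_eq_real_def less_irrefl)
qed

lemma strict_inj:
  fixes x :: "nat \<Rightarrow> real"
  assumes "\<forall>i j. i < j \<longrightarrow> j < n \<longrightarrow> x i < x j"
  shows "\<forall>i j. i < n \<longrightarrow> j < n \<longrightarrow> x i = x j \<longrightarrow> i = j"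
  using assms by (metis less_irrefl linorder_neqE_nat)

lemma legendre_rec:
  assumes "1 \<le> n"
  shows "legendre (Suc n) z = ((2 * real n + 1) * z * legendre n z - real n * legendre (n - 1) z) / (real n + 1)"
proof -
  obtain n' where n: "n = Suc n'" using assms by (cases n) auto
  show ?thesis unfolding n by (simp add: field_simps)
qed

lemma leg_roots:
  assumes "1 \<le> n"
  shows "\<exists>x::nat\<Rightarrow>real. (\<forall>i j. i < j \<longrightarrow> j < n \<longrightarrow> x i < x j)
     \<and> (\<forall>i<n. -1 < x i \<and> x i < 1 \<and> legendre n (x i) = 0)
     \<and> (\<forall>i<n. sgn (legendre (n - 1) (x i)) = (-1) ^ (n - 1 - i))"
  using assms
proof (induction n rule: nat_induct_at_least)
  case base
  show ?case by (rule exI[of _ "\<lambda>_. 0"]) simp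
next
  case (Suc n)
  then obtain x where xm: "\<forall>i j. i < j \<longrightarrow> j < n \<longrightarrow> x i < x j"
    and xr: "\<forall>i<n. -1 < x i \<and> x i < 1 \<and> legendre n (x i) = 0"
    and xs: "\<forall>i<n. sgn (legendre (n - 1) (x i)) = (-1) ^ (n - 1 - i)" by blast
  define t where "t j = (if j = 0 then -1 else if j \<le> n then x (j - 1) else 1)" for j
  have tle: "t i \<le> t j" if ij: "i \<le> j" "j \<le> Suc n" for i j
  proof -
    consider "i = j" | "i = 0" "j \<noteq> 0" | "j = Suc n" "i \<noteq> j" | "0 < i" "i < j" "j \<le> n" using ij by (cases "i = j"; cases "i = 0"; cases "j = Suc n"; auto)
    then show ?thesis
    proof cases
      case 1 then show ?thesis by simp
    next
      case 2 then show ?thesis unfolding t_def using xr \<open>j \<le> Suc n\<close>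
        by (auto simp: less_eq_real_def)
    next
      case 3 then show ?thesis unfolding t_def using xr ij
        by (auto simp: less_eq_real_def)
    next
      case 4 then show ?thesis unfolding t_def using xm
        by (auto simp: less_eq_real_def)
    qed
  qed
  have tlt: "t j < t (Suc j)" if jn: "j \<le> n" for j
  proof -
    consider "j = 0" | "0 < j" "j < n" | "0 < j" "j = n" using jn by (cases "j = 0"; cases "j = n"; auto)
    then show ?thesis
    proof cases
      case 1 then show ?thesis unfolding t_def using xr \<open>1 \<le> n\<close> by auto
    next
      case 2 then show ?thesis unfolding t_def using xm by auto
    next
      case 3 then show ?thesis unfolding t_def using xr by auto
    qed
  qed
  have tsign: "sgn (legendre (Suc n) (t j)) = (-1) ^ (Suc n - j)" if jn: "j \<le> Suc n" for j
  proof -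
    consider "j = 0" | "0 < j" "j \<le> n" | "j = Suc n" using jn by (cases "j = 0"; cases "j = Suc n"; auto)
    then show ?thesis
    proof cases
      case 1 then show ?thesis unfolding t_def by (simp add: legendre_neg1 sgn_neg1_pow del: power_Suc)
    next
      case 2
      define i where "i = j - 1"
      have i: "i < n" "j = Suc i" using 2 by (auto simp: i_def)
      have "t j = x i" unfolding t_def using 2 i by auto
      have "legendre (Suc n) (x i) = - (real n / (real n + 1)) * legendre (n - 1) (x i)"
        using legendre_rec[OF \<open>1 \<le> n\<close>, of "x i"] xr i by (simp add: field_simps)
      then have "sgn (legendre (Suc n) (x i)) = - sgn (legendre (n - 1) (x i))"
        using \<open>1 \<le> n\<close> by (simp add: sgn_mult)
      also have "\<dots> = - ((-1::real) ^ (n - 1 - i))" using xs i by simp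
      also have "\<dots> = (-1) ^ (Suc n - j)"
        using i by (simp add: Suc_diff_Suc[symmetric] del: power_Suc) (metis Suc_diff_Suc Suc_pred' \<open>1 \<le> n\<close> less_le_trans zero_less_one power_Suc mult_minus1)
      finally show ?thesis using \<open>t j = x i\<close> by simp
    next
      case 3 then show ?thesis unfolding t_def by (simp add: legendre_one)
    qed
  qed
  have "\<forall>j. j \<le> n \<longrightarrow> (\<exists>y. t j < y \<and> y < t (Suc j) \<and> legendre (Suc n) y = 0)"
  proof (intro allI impI)
    fix j assume j: "j \<le> n"
    have s1: "sgn (legendre (Suc n) (t j)) = (-1) ^ (Suc n - j)" using tsign j by simp
    have s2: "sgn (legendre (Suc n) (t (Suc j))) = (-1) ^ (n - j)" using tsign[of "Suc j"] j by simp
    have "sgn (legendre (Suc n) (t j) * legendre (Suc n) (t (Suc j))) = -1"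
      using s1 s2 j by (simp add: sgn_mult Suc_diff_le flip: power_add)
    then have "legendre (Suc n) (t j) * legendre (Suc n) (t (Suc j)) < 0"
      by (simp add: sgn_if split: if_splits) (metis linorder_neqE_linordered_idom no_zero_divisors)
    then show "\<exists>y. t j < y \<and> y < t (Suc j) \<and> legendre (Suc n) y = 0"
      by (intro ivt_sign tlt j isCont_legendre)
  qed
  then obtain y where y: "\<forall>j. j \<le> n \<longrightarrow> t j < y j \<and> y j < t (Suc j) \<and> legendre (Suc n) (y j) = 0"
    by (subst (asm) choice_iff') blast
  have ym: "\<forall>i j. i < j \<longrightarrow> j < Suc n \<longrightarrow> y i < y j"
  proof (intro allI impI)
    fix i j assume "i < j" "j < Suc n"
    then have "y i < t (Suc i)" "t (Suc i) \<le> t j" "t j < y j" using y tle by auto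
    then show "y i < y j" by linarith
  qed
  have yr: "\<forall>i<Suc n. -1 < y i \<and> y i < 1 \<and> legendre (Suc n) (y i) = 0"
  proof (intro allI impI)
    fix i assume "i < Suc n"
    then have "t 0 \<le> t i" "t i < y i" "y i < t (Suc i)" "t (Suc i) \<le> t (Suc n)" "legendre (Suc n) (y i) = 0"
      using y tle by auto
    moreover have "t 0 = -1" "t (Suc n) = 1" unfolding t_def by auto
    ultimately show "-1 < y i \<and> y i < 1 \<and> legendre (Suc n) (y i) = 0" by linarith
  qed
  have fac: "Lp n = smult (lead_coeff (Lp n)) (\<Prod>i<n. [:-x i, 1:])"
    by (rule factor_roots) (use degree_Lp xr strict_inj[OF xm] poly_Lp in auto)
  have kpos: "lead_coeff (Lp n) > 0" using coeff_Lp_lead[of n] by (simp add: degree_Lp)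
  have ys: "\<forall>j<Suc n. sgn (legendre (Suc n - 1) (y j)) = (-1) ^ (Suc n - 1 - j)"
  proof (intro allI impI)
    fix j assume j: "j < Suc n"
    have "legendre n (y j) = lead_coeff (Lp n) * (\<Prod>i<n. y j - x i)"
      by (subst poly_Lp[symmetric], subst fac) (simp add: poly_prod)
    then have "sgn (legendre n (y j)) = (\<Prod>i<n. sgn (y j - x i))"
      using kpos by (simp add: sgn_mult sgn_prod_lessThan)
    also have "\<dots> = (\<Prod>i<n. (if i < j then 1 else -1::real))"
    proof (rule prod.cong)
      fix i assume "i \<in> {..<n}"
      then have i: "i < n" by simp
      have txi: "t (Suc i) = x i" unfolding t_def using i by auto
      show "sgn (y j - x i) = (if i < j then 1 else -1)"
      proof (cases "i < j")
        case True
        then have "t (Suc i) \<le> t j" "t j < y j" using tle y j by auto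
        then show ?thesis using True txi by simp
      next
        case False
        then have "y j < t (Suc j)" "t (Suc j) \<le> t (Suc i)" using tle y j i by auto
        then show ?thesis using False txi by simp
      qed
    qed simp
    also have "\<dots> = (-1) ^ (n - j)" by (rule prod_if_sign)
    finally show "sgn (legendre (Suc n - 1) (y j)) = (-1) ^ (Suc n - 1 - j)" by simp
  qed
  show ?case using ym yr ys by blast
qed



lemma deg1_poly:
  fixes r :: "real poly"
  assumes "degree r \<le> 1"
  shows "r = [:coeff r 0, coeff r 1:]"
proof (rule poly_eqI)
  fix n show "coeff r n = coeff [:coeff r 0, coeff r 1:] n"
  proof (cases n)
    case (Suc n') then show ?thesis using assms by (cases n') (auto simp: coeff_eq_0)
  qed simp
qed

lemma edge:
  fixes F :: "real poly"
  assumes m: "odd m" and deg: "degree F \<le> Suc m" and dvd: "Lp m dvd F"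
  shows "poly F 1 = (coeff F (Suc m) + coeff F m) / lead_coeff (Lp m)"
    and "poly F (-1) = (coeff F (Suc m) - coeff F m) / lead_coeff (Lp m)"
    and "coeff F (Suc m) = 0 \<Longrightarrow> coeff F m = 0 \<Longrightarrow> F = 0"
proof -
  let ?L = "Lp m"
  have kappa: "lead_coeff ?L = coeff ?L m" by (simp add: degree_Lp)
  have kpos: "coeff ?L m > 0" by (rule coeff_Lp_lead)
  have L0: "?L \<noteq> 0" using kpos by auto
  obtain r where r: "F = ?L * r" using dvd by (auto elim: dvdE)
  have "degree r \<le> 1"
  proof (cases "r = 0")
    case False
    then have "degree F = m + degree r" using r L0 by (simp add: degree_mult_eq degree_Lp)
    then show ?thesis using deg by simp
  qed simp
  then have rr: "r = [:coeff r 0, coeff r 1:]" by (rule deg1_poly)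
  define r0 where "r0 = coeff r 0"
  define r1 where "r1 = coeff r 1"
  have "?L * r = ?L * [:r0, r1:]"
    unfolding r0_def r1_def by (rule arg_cong[where f="\<lambda>q. ?L * q"], rule rr)
  then have F: "F = smult r0 ?L + pCons 0 (smult r1 ?L)"
    using r by (simp add: mult_pCons_right)
  obtain m' where m': "m = Suc m'" using m by (cases m) auto
  have c1: "coeff ?L (Suc m) = 0" by (rule coeff_Lp_high) simp
  have c2: "coeff ?L m' = 0" by (rule coeff_Lp_parity) (use m m' in simp)
  have A: "coeff F (Suc m) = r1 * coeff ?L m" unfolding F using c1 by simp
  have B: "coeff F m = r0 * coeff ?L m" unfolding F using c2 m' by simp
  have p1: "poly ?L 1 = 1" by (simp add: poly_Lp legendre_one)
  have pm1: "poly ?L (-1) = -1" using m by (simp add: poly_Lp legendre_neg1)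
  show "poly F 1 = (coeff F (Suc m) + coeff F m) / lead_coeff ?L"
    unfolding A B kappa using kpos p1 by (simp add: F field_simps)
  show "poly F (-1) = (coeff F (Suc m) - coeff F m) / lead_coeff ?L"
    unfolding A B kappa using kpos pm1 by (simp add: F field_simps)
  show "coeff F (Suc m) = 0 \<Longrightarrow> coeff F m = 0 \<Longrightarrow> F = 0"
    unfolding A B using kpos by (simp add: F)
qed

lemma legendre_roots_odd:
  assumes "odd m"
  obtains x where "\<forall>i j. i < j \<longrightarrow> j < m \<longrightarrow> x i < x j"
    and "\<forall>i<m. -1 < x i \<and> x i < 1 \<and> legendre m (x i) = 0"
    and "\<And>F. \<forall>i<m. poly F (x i) = 0 \<Longrightarrow> Lp m dvd F"
proof -
  have "1 \<le> m" using assms by (cases m) auto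
  then obtain x where xm: "\<forall>i j. i < j \<longrightarrow> j < m \<longrightarrow> x i < x j"
    and xr: "\<forall>i<m. -1 < x i \<and> x i < 1 \<and> legendre m (x i) = 0"
    using leg_roots by blast
  have fac: "Lp m = smult (lead_coeff (Lp m)) (\<Prod>i<m. [:-x i, 1:])"
    by (rule factor_roots) (use degree_Lp xr strict_inj[OF xm] poly_Lp in auto)
  have kpos: "lead_coeff (Lp m) > 0" using coeff_Lp_lead[of m] by (simp add: degree_Lp)
  have "Lp m dvd F" if "\<forall>i<m. poly F (x i) = 0" for F
  proof -
    have "(\<Prod>i<m. [:-x i, 1:]) dvd F" by (rule prod_lin_dvd[OF strict_inj[OF xm] that])
    then have "smult (lead_coeff (Lp m)) (\<Prod>i<m. [:-x i, 1:]) dvd F"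
      using kpos by (intro smult_dvd) auto
    then show ?thesis using fac by simp
  qed
  then show ?thesis using that xm xr by blast
qed



definition ev :: "nat \<Rightarrow> (nat \<Rightarrow> nat \<Rightarrow> real) \<Rightarrow> real \<Rightarrow> real \<Rightarrow> real" where
  "ev M c x y = (\<Sum>i\<le>M. \<Sum>j\<le>M. c i j * x ^ i * y ^ j)"

lemma ev_swap: "ev M (\<lambda>i j. c j i) x y = ev M c y x"
  unfolding ev_def by (subst sum.swap) (simp add: mult_ac)

lemma ev_coeff_y: "ev M c x y = (\<Sum>j\<le>M. (\<Sum>i\<le>M. c i j * x ^ i) * y ^ j)"
  unfolding ev_def by (subst sum.swap) (simp add: sum_distrib_right)

lemma ev_coeff_x: "ev M c x y = (\<Sum>i\<le>M. (\<Sum>j\<le>M. c i j * y ^ j) * x ^ i)"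
  unfolding ev_def by (simp add: sum_distrib_right sum_distrib_left mult_ac)

lemma poly_sum_le:
  fixes p :: "real poly"
  assumes "degree p \<le> N"
  shows "poly p x = (\<Sum>i\<le>N. coeff p i * x ^ i)"
proof -
  have "poly p x = (\<Sum>i\<le>degree p. coeff p i * x ^ i)" by (simp add: poly_altdef)
  also have "\<dots> = (\<Sum>i\<le>N. coeff p i * x ^ i)"
    by (rule sum.mono_neutral_left) (use assms in \<open>auto simp: coeff_eq_0\<close>)
  finally show ?thesis .
qed

lemma udiv:
  fixes c :: "nat \<Rightarrow> real"
  assumes sup: "\<forall>i. c i \<noteq> 0 \<longrightarrow> i \<le> n" and nN: "n \<le> N"
    and z1: "(\<Sum>i\<le>N. c i) = 0" and z2: "(\<Sum>i\<le>N. c i * (-1) ^ i) = 0"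
  shows "\<exists>b. (\<forall>i. b i \<noteq> 0 \<longrightarrow> i + 2 \<le> n) \<and>
             (\<forall>x. (\<Sum>i\<le>N. c i * x ^ i) = (1 - x^2) * (\<Sum>i\<le>N. b i * x ^ i))"
proof -
  define P where "P = (\<Sum>i\<le>N. monom (c i) i)"
  have polyP: "poly P x = (\<Sum>i\<le>N. c i * x ^ i)" for x
    unfolding P_def by (simp add: poly_sum poly_monom)
  have coeffP: "coeff P i = (if i \<le> N then c i else 0)" for i
    unfolding P_def by (simp add: coeff_sum coeff_monom)
  have degP: "degree P \<le> n"
    by (rule degree_le) (use sup in \<open>auto simp: coeffP\<close>)
  have "poly P 1 = 0" using z1 by (simp add: polyP)
  then have "[:-1, 1:] dvd P" by (simp add: poly_eq_0_iff_dvd)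
  then obtain Q where Q: "P = [:-1, 1:] * Q" by (auto elim: dvdE)
  have "poly P (-1) = 0" using z2 by (simp add: polyP mult.commute)
  then have "poly Q (-1) = 0" using Q by simp
  then have "[:1, 1:] dvd Q" by (simp add: poly_eq_0_iff_dvd)
  then obtain R where R: "Q = [:1, 1:] * R" by (auto elim: dvdE)
  have PR: "P = [:-1, 0, 1:] * R" using Q R by (simp add: mult.assoc[symmetric] mult_pCons_left)
  have degR: "degree R + 2 \<le> n" if "R \<noteq> 0"
  proof -
    have "degree P = degree [:-1, 0, 1::real:] + degree R" unfolding PR
      by (rule degree_mult_eq) (use that in auto)
    then show ?thesis using degP by simp
  qed
  show ?thesis
  proof (intro exI conjI allI impI)
    fix i assume "- coeff R i \<noteq> 0"
    then have "R \<noteq> 0" "i \<le> degree R" by (auto intro: le_degree)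
    then show "i + 2 \<le> n" using degR by simp
  next
    fix x
    have dR: "degree R \<le> N" using degR nN by (cases "R = 0") auto
    have "(\<Sum>i\<le>N. c i * x ^ i) = poly P x" by (simp add: polyP)
    also have "\<dots> = (x^2 - 1) * poly R x" by (simp add: PR power2_eq_square algebra_simps)
    also have "\<dots> = (1 - x^2) * (\<Sum>i\<le>N. - coeff R i * x ^ i)"
      using poly_sum_le[OF dR, of x] by (simp add: sum_negf algebra_simps)
    finally show "(\<Sum>i\<le>N. c i * x ^ i) = (1 - x^2) * (\<Sum>i\<le>N. - coeff R i * x ^ i)" .
  qed
qed

lemma div2d:
  assumes sup: "\<forall>i j. c i j \<noteq> 0 \<longrightarrow> i + j + s \<le> M"
    and z1: "\<forall>y. ev M c 1 y = 0" and z2: "\<forall>y. ev M c (-1) y = 0"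
  shows "\<exists>e. (\<forall>i j. e i j \<noteq> 0 \<longrightarrow> i + j + s + 2 \<le> M) \<and> (\<forall>x y. ev M c x y = (1 - x^2) * ev M e x y)"
proof -
  have s1: "(\<Sum>i\<le>M. c i j) = 0" for j
  proof (cases "j \<le> M")
    case True
    have "\<forall>y. (\<Sum>j\<le>M. (\<Sum>i\<le>M. c i j * 1 ^ i) * y ^ j) = 0" using z1 by (simp add: ev_coeff_y)
    then show ?thesis using True by (subst (asm) polyfun_eq_0) simp
  next
    case False then show ?thesis using sup by (auto intro!: sum.neutral) (metis add_leD1 add_leD2)
  qed
  have s2: "(\<Sum>i\<le>M. c i j * (-1) ^ i) = 0" for j
  proof (cases "j \<le> M")
    case True
    have "\<forall>y. (\<Sum>j\<le>M. (\<Sum>i\<le>M. c i j * (-1) ^ i) * y ^ j) = 0" using z2 by (simp add: ev_coeff_y)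
    then show ?thesis using True by (subst (asm) polyfun_eq_0) simp
  next
    case False then show ?thesis using sup by (auto intro!: sum.neutral) (metis add_leD1 add_leD2)
  qed
  have "\<forall>j. \<exists>b. (\<forall>i. b i \<noteq> 0 \<longrightarrow> i + 2 \<le> M - j - s) \<and>
             (\<forall>x. (\<Sum>i\<le>M. c i j * x ^ i) = (1 - x^2) * (\<Sum>i\<le>M. b i * x ^ i))"
  proof
    fix j
    show "\<exists>b. (\<forall>i. b i \<noteq> 0 \<longrightarrow> i + 2 \<le> M - j - s) \<and>
             (\<forall>x. (\<Sum>i\<le>M. c i j * x ^ i) = (1 - x^2) * (\<Sum>i\<le>M. b i * x ^ i))"
    proof (rule udiv)
      show "\<forall>i. c i j \<noteq> 0 \<longrightarrow> i \<le> M - j - s"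
      proof (intro allI impI)
        fix i assume "c i j \<noteq> 0"
        then have "i + j + s \<le> M" using sup by blast
        then show "i \<le> M - j - s" by linarith
      qed
    qed (use s1 s2 in auto)
  qed
  then obtain B where B: "\<forall>j. (\<forall>i. B j i \<noteq> 0 \<longrightarrow> i + 2 \<le> M - j - s) \<and>
             (\<forall>x. (\<Sum>i\<le>M. c i j * x ^ i) = (1 - x^2) * (\<Sum>i\<le>M. B j i * x ^ i))"
    by metis
  show ?thesis
  proof (intro exI[of _ "\<lambda>i j. B j i"] conjI allI impI)
    fix i j assume "B j i \<noteq> 0"
    then have "i + 2 \<le> M - j - s" using B by blast
    then show "i + j + s + 2 \<le> M" by linarith
  next
    fix x y
    have "ev M c x y = (\<Sum>j\<le>M. (\<Sum>i\<le>M. c i j * x ^ i) * y ^ j)" by (rule ev_coeff_y)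
    also have "\<dots> = (\<Sum>j\<le>M. (1 - x^2) * (\<Sum>i\<le>M. B j i * x ^ i) * y ^ j)" using B by simp
    also have "\<dots> = (1 - x^2) * ev M (\<lambda>i j. B j i) x y"
    proof -
      define S where "S j = (\<Sum>i\<le>M. B j i * x ^ i)" for j
      have "(\<Sum>j\<le>M. (1 - x^2) * S j * y ^ j) = (1 - x^2) * (\<Sum>j\<le>M. S j * y ^ j)"
        by (simp add: sum_distrib_left mult.assoc)
      then show ?thesis by (simp add: S_def ev_coeff_y)
    qed
    finally show "ev M c x y = (1 - x^2) * ev M (\<lambda>i j. B j i) x y" .
  qed
qed

lemma poly_zero_off2:
  fixes f :: "nat \<Rightarrow> real"
  assumes h: "\<And>x. x \<noteq> 1 \<Longrightarrow> x \<noteq> -1 \<Longrightarrow> (\<Sum>i\<le>M. f i * x ^ i) = 0"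
  shows "\<forall>i\<le>M. f i = 0"
proof (rule ccontr)
  assume "\<not> (\<forall>i\<le>M. f i = 0)"
  then have fin: "finite {x. (\<Sum>i\<le>M. f i * x ^ i) = 0}"
    using polyfun_finite_roots[of f M] by blast
  have "UNIV - {1, -1} \<subseteq> {x. (\<Sum>i\<le>M. f i * x ^ i) = 0}" using h by blast
  then have "finite (UNIV - {1, -1::real})" using fin finite_subset by blast
  then show False by (simp add: infinite_UNIV_char_0)
qed

lemma nz2: "(x::real) \<noteq> 1 \<Longrightarrow> x \<noteq> -1 \<Longrightarrow> 1 - x^2 \<noteq> 0"
  using power2_eq_1_iff[of x] by auto

lemma bdiv:
  assumes sup: "\<forall>i j. c i j \<noteq> 0 \<longrightarrow> i + j \<le> M"
    and z1: "\<forall>y. ev M c 1 y = 0" and z2: "\<forall>y. ev M c (-1) y = 0"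
    and z3: "\<forall>x. ev M c x 1 = 0" and z4: "\<forall>x. ev M c x (-1) = 0"
  shows "\<exists>d. (\<forall>i j. d i j \<noteq> 0 \<longrightarrow> i + j + 4 \<le> M) \<and>
             (\<forall>x y. ev M c x y = (1 - x^2) * (1 - y^2) * ev M d x y)"
proof -
  have sup0: "\<forall>i j. c i j \<noteq> 0 \<longrightarrow> i + j + 0 \<le> M" using sup by simp
  obtain e where esup: "\<forall>i j. e i j \<noteq> 0 \<longrightarrow> i + j + 0 + 2 \<le> M"
    and ee: "\<forall>x y. ev M c x y = (1 - x^2) * ev M e x y"
    using div2d[OF sup0 z1 z2] by blast
  have ez: "\<forall>x. ev M e x s0 = 0" if zs: "\<forall>x. ev M c x s0 = 0" for s0
  proof -
    have "\<forall>i\<le>M. (\<Sum>j\<le>M. e i j * s0 ^ j) = 0"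
    proof (rule poly_zero_off2)
      fix x :: real assume "x \<noteq> 1" "x \<noteq> -1"
      then have nz: "1 - x^2 \<noteq> 0" by (rule nz2)
      have "ev M c x s0 = (1 - x^2) * ev M e x s0" using ee by blast
      then have "ev M e x s0 = 0" using nz zs by simp
      then show "(\<Sum>i\<le>M. (\<Sum>j\<le>M. e i j * s0 ^ j) * x ^ i) = 0" by (simp only: ev_coeff_x)
    qed
    then show ?thesis by (simp add: ev_coeff_x)
  qed
  have e1: "\<forall>x. ev M e x 1 = 0" using ez z3 by blast
  have e2: "\<forall>x. ev M e x (-1) = 0" using ez z4 by blast
  have h1: "\<forall>i j. e j i \<noteq> 0 \<longrightarrow> i + j + 2 \<le> M"
  proof (intro allI impI)
    fix i j assume "e j i \<noteq> 0"
    then have "j + i + 0 + 2 \<le> M" using esup by blast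
    then show "i + j + 2 \<le> M" by linarith
  qed
  have h2: "\<forall>y. ev M (\<lambda>i j. e j i) 1 y = 0"
  proof fix y show "ev M (\<lambda>i j. e j i) 1 y = 0" using e1 ev_swap[of M e 1 y] by simp qed
  have h3: "\<forall>y. ev M (\<lambda>i j. e j i) (-1) y = 0"
  proof fix y show "ev M (\<lambda>i j. e j i) (-1) y = 0" using e2 ev_swap[of M e "-1" y] by simp qed
  obtain d where dsup: "\<forall>i j. d i j \<noteq> 0 \<longrightarrow> i + j + 2 + 2 \<le> M"
    and dd: "\<forall>x y. ev M (\<lambda>i j. e j i) x y = (1 - x^2) * ev M d x y"
    using div2d[OF h1 h2 h3] by blast
  show ?thesis
  proof (intro exI[of _ "\<lambda>i j. d j i"] conjI allI impI)
    fix i j assume "d j i \<noteq> 0" then have "j + i + 2 + 2 \<le> M" using dsup by blast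
    then show "i + j + 4 \<le> M" by linarith
  next
    fix x y
    have "ev M e x y = (1 - y^2) * ev M (\<lambda>i j. d j i) x y"
      using dd[rule_format, of y x] ev_swap[of M e y x] ev_swap[of M d x y] by simp
    then show "ev M c x y = (1 - x\<^sup>2) * (1 - y\<^sup>2) * ev M (\<lambda>i j. d j i) x y"
      using ee[rule_format, of x y] by simp
  qed
qed

lemma tri_ev:
  assumes "N \<le> M"
  shows "(\<Sum>i\<le>N. \<Sum>j\<le>N - i. c i j * x ^ i * y ^ j) = ev M (\<lambda>i j. if i + j \<le> N then c i j else 0) x y"
proof -
  have inner: "(\<Sum>j\<le>M. (if i + j \<le> N then c i j else 0) * x ^ i * y ^ j) =
      (if i \<le> N then (\<Sum>j\<le>N - i. c i j * x ^ i * y ^ j) else 0)" for i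
  proof -
    have "(\<Sum>j\<le>M. (if i + j \<le> N then c i j else 0) * x ^ i * y ^ j) =
        (\<Sum>j\<in>{j\<in>{..M}. i + j \<le> N}. c i j * x ^ i * y ^ j)"
      by (subst sum.inter_filter) (auto intro!: sum.cong)
    also have "{j\<in>{..M}. i + j \<le> N} = (if i \<le> N then {..N - i} else {})"
      using assms by auto
    finally show ?thesis by simp
  qed
  have "ev M (\<lambda>i j. if i + j \<le> N then c i j else 0) x y =
      (\<Sum>i\<le>M. if i \<le> N then (\<Sum>j\<le>N - i. c i j * x ^ i * y ^ j) else 0)"
    unfolding ev_def using inner by simp
  also have "\<dots> = (\<Sum>i\<in>{i\<in>{..M}. i \<le> N}. \<Sum>j\<le>N - i. c i j * x ^ i * y ^ j)"
    by (subst sum.inter_filter) auto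
  also have "{i\<in>{..M}. i \<le> N} = {..N}" using assms by auto
  finally show ?thesis by simp
qed



definition VV :: "nat \<Rightarrow> (nat \<Rightarrow> nat \<Rightarrow> real) \<Rightarrow> real \<Rightarrow> real \<Rightarrow> real \<Rightarrow> real \<Rightarrow> real" where
  "VV m c a b x y = ev m c x y + a * (x ^ m * y - x * y ^ m) + b * (x ^ Suc m - y ^ Suc m)"

lemma VV_swap: "VV m c a b x y = VV m (\<lambda>i j. c j i) (-a) (-b) y x"
  by (simp add: VV_def ev_swap[of m c y x] algebra_simps)

lemma edge_x:
  assumes m: "odd m" and sup: "\<forall>i j. c i j \<noteq> 0 \<longrightarrow> i + j \<le> m" and a1: "m = 1 \<longrightarrow> a = 0"
    and roots: "\<forall>F. (\<forall>i<m. poly F (x i) = 0) \<longrightarrow> Lp m dvd F"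
    and van: "\<forall>i<m. VV m c a b s (x i) = 0"
  shows "VV m c a b s 1 = (- b + c 0 m - a * s) / lead_coeff (Lp m)"
    and "VV m c a b s (-1) = (- b - c 0 m + a * s) / lead_coeff (Lp m)"
    and "b = 0 \<Longrightarrow> c 0 m = a * s \<Longrightarrow> VV m c a b s y = 0"
proof -
  define F where "F = (\<Sum>j\<le>m. monom (\<Sum>i\<le>m. c i j * s ^ i) j)
      + smult a (monom (s ^ m) 1 - monom s m) + smult b (monom (s ^ Suc m) 0 - monom 1 (Suc m))"
  have polyF: "poly F y = VV m c a b s y" for y
    unfolding F_def VV_def by (simp add: poly_sum poly_monom ev_coeff_y algebra_simps)
  have coeffF: "coeff F n = (if n \<le> m then (\<Sum>i\<le>m. c i n * s ^ i) else 0)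
      + a * ((if n = 1 then s ^ m else 0) - (if n = m then s else 0))
      + b * ((if n = 0 then s ^ Suc m else 0) - (if n = Suc m then 1 else 0))" for n
    unfolding F_def by (simp add: coeff_sum coeff_monom)
  have deg: "degree F \<le> Suc m" by (rule degree_le) (simp add: coeffF)
  have dvd: "Lp m dvd F" by (rule roots[rule_format]) (simp add: polyF van)
  have "(\<Sum>i\<le>m. c i m * s ^ i) = (\<Sum>i\<le>m. if i = 0 then c 0 m else 0)"
  proof (rule sum.cong)
    fix i assume "i \<in> {..m}"
    show "c i m * s ^ i = (if i = 0 then c 0 m else 0)"
    proof (cases "i = 0")
      case False
      then have "c i m = 0" using sup by (metis add_le_same_cancel2 not_gr_zero not_le)
      then show ?thesis using False by simp
    qed simp
  qed simp
  then have s0: "(\<Sum>i\<le>m. c i m * s ^ i) = c 0 m" by simp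
  have m0: "m \<noteq> 0" using m odd_pos by auto
  have cm: "coeff F m = c 0 m - a * s"
    using a1 m0 sup[rule_format, of 1 1] by (cases "m = 1") (auto simp: coeffF s0)
  have cSm: "coeff F (Suc m) = - b" using m0 by (simp add: coeffF)
  show "VV m c a b s 1 = (- b + c 0 m - a * s) / lead_coeff (Lp m)"
    using edge(1)[OF m deg dvd] by (simp add: polyF cm cSm)
  show "VV m c a b s (-1) = (- b - c 0 m + a * s) / lead_coeff (Lp m)"
    using edge(2)[OF m deg dvd] by (simp add: polyF cm cSm)
  show "b = 0 \<Longrightarrow> c 0 m = a * s \<Longrightarrow> VV m c a b s y = 0"
  proof -
    assume "b = 0" "c 0 m = a * s"
    then have "F = 0" using edge(3)[OF m deg dvd] by (simp add: cm cSm)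
    then show ?thesis using polyF[of y] by simp
  qed
qed



theorem theorem3p1:
  fixes k :: nat and I :: "(real \<times> real) set" and v :: "real \<times> real \<Rightarrow> real"
  assumes I_fin: "finite I"
    and I_int: "I \<subseteq> {-1<..<1} \<times> {-1<..<1}"
    and I_card: "card I = (2 * k - 1) * (k - 1)"
    and I_empty: "k \<le> 1 \<Longrightarrow> I = {}"
    and I_unisolvent: "k \<ge> 2 \<Longrightarrow>
          \<forall>p. polyP (2 * k - 3) p \<and> (\<forall>z\<in>I. p z = 0) \<longrightarrow> (\<forall>z. p z = 0)"
    and hv: "ER (2 * k + 1) v"
    and vanish: "\<forall>z \<in> Gset k \<union> I. v z = 0"
  shows "\<forall>z. v z = 0"
proof -
  define m where "m = 2 * k + 1"
  have modd: "odd m" unfolding m_def by simp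
  obtain p a0 b where pP: "polyP m p"
    and vdef: "\<forall>x y. v (x, y) = p (x, y) + a0 * (x ^ m * y - x * y ^ m) + b * (x ^ (m + 1) - y ^ (m + 1))"
    using hv unfolding ER_def m_def by blast
  obtain c where pc: "\<forall>x y. p (x, y) = (\<Sum>i\<le>m. \<Sum>j\<le>m - i. c i j * x ^ i * y ^ j)"
    using pP unfolding polyP_def by blast
  define c' where "c' i j = (if i + j \<le> m then c i j else 0)" for i j
  have csup: "\<forall>i j. c' i j \<noteq> 0 \<longrightarrow> i + j \<le> m" unfolding c'_def by auto
  have pev: "p (x, y) = ev m c' x y" for x y
    using pc tri_ev[of m m c x y] unfolding c'_def by simp
  define a where "a = (if k = 0 then 0 else a0)"
  have a1: "m = 1 \<longrightarrow> a = 0" unfolding a_def m_def by simp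
  have vV: "v (x, y) = VV m c' a b x y" for x y
  proof (cases "k = 0")
    case True
    then have "m = 1" unfolding m_def by simp
    then show ?thesis using vdef pev unfolding VV_def a_def by (simp add: True)
  next
    case False
    then show ?thesis using vdef pev unfolding VV_def a_def by simp
  qed
  obtain xr where xm: "\<forall>i j. i < j \<longrightarrow> j < m \<longrightarrow> xr i < xr j"
    and xr: "\<forall>i<m. -1 < xr i \<and> xr i < 1 \<and> legendre m (xr i) = 0"
    and roots: "\<And>F. \<forall>i<m. poly F (xr i) = 0 \<Longrightarrow> Lp m dvd F"
    using legendre_roots_odd[OF modd] by blast
  have inG: "(1, xr i) \<in> Gset k \<and> (-1, xr i) \<in> Gset k \<and> (xr i, 1) \<in> Gset k \<and> (xr i, -1) \<in> Gset k"
    if "i < m" for i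
  proof -
    have "xr i \<in> {g. -1 \<le> g \<and> g \<le> 1 \<and> legendre (2 * k + 1) g = 0}"
      using xr that unfolding m_def by (auto simp: less_eq_real_def)
    then show ?thesis unfolding Gset_def by blast
  qed
  define cT where "cT i j = c' j i" for i j
  have cTsup: "\<forall>i j. cT i j \<noteq> 0 \<longrightarrow> i + j \<le> m" using csup unfolding cT_def by (metis add.commute)
  have a1T: "m = 1 \<longrightarrow> - a = 0" using a1 by simp
  have swp: "VV m c' a b x y = VV m cT (-a) (-b) y x" for x y
    unfolding cT_def by (rule VV_swap)
  have vanX: "\<forall>i<m. VV m c' a b s (xr i) = 0" if "s = 1 \<or> s = -1" for s
    using that inG vanish vV by (metis UnI1)
  have vanY: "\<forall>i<m. VV m cT (-a) (-b) s (xr i) = 0" if "s = 1 \<or> s = -1" for s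
    using that inG vanish vV swp by (metis UnI1)
  let ?K = "lead_coeff (Lp m)"
  have kpos: "?K > 0" using coeff_Lp_lead[of m] by (simp add: degree_Lp)
  have L0: "Lp m \<noteq> 0" using kpos by auto
  have rootsH: "\<forall>F. (\<forall>i<m. poly F (xr i) = 0) \<longrightarrow> Lp m dvd F" using roots by blast
  note EX = edge_x[where x=xr, OF modd csup a1 rootsH]
  note EY = edge_x[where x=xr, OF modd cTsup a1T rootsH]
  have vX1: "\<forall>i<m. VV m c' a b 1 (xr i) = 0" by (rule vanX) simp
  have vXm: "\<forall>i<m. VV m c' a b (-1) (xr i) = 0" by (rule vanX) simp
  have vY1: "\<forall>i<m. VV m cT (-a) (-b) 1 (xr i) = 0" by (rule vanY) simp
  have vYm: "\<forall>i<m. VV m cT (-a) (-b) (-1) (xr i) = 0" by (rule vanY) simp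
  have cT0: "cT 0 m = c' m 0" unfolding cT_def by simp
  have X11: "VV m c' a b 1 1 = (- b + c' 0 m - a) / ?K" using EX(1)[OF vX1] by simp
  have X1m: "VV m c' a b 1 (-1) = (- b - c' 0 m + a) / ?K" using EX(2)[OF vX1] by simp
  have Xm1: "VV m c' a b (-1) 1 = (- b + c' 0 m + a) / ?K" using EX(1)[OF vXm] by simp
  have Xmm: "VV m c' a b (-1) (-1) = (- b - c' 0 m - a) / ?K" using EX(2)[OF vXm] by simp
  have Y11: "VV m c' a b 1 1 = (b + c' m 0 + a) / ?K" using EY(1)[OF vY1] swp[of 1 1] cT0 by simp
  have Y1m: "VV m c' a b (-1) 1 = (b - c' m 0 - a) / ?K" using EY(2)[OF vY1] swp[of "-1" 1] cT0 by simp
  have Ym1: "VV m c' a b 1 (-1) = (b + c' m 0 - a) / ?K" using EY(1)[OF vYm] swp[of 1 "-1"] cT0 by simp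
  have Ymm: "VV m c' a b (-1) (-1) = (b - c' m 0 + a) / ?K" using EY(2)[OF vYm] swp[of "-1" "-1"] cT0 by simp
  have q1: "- b + c' 0 m - a = b + c' m 0 + a" using X11 Y11 kpos L0 by simp
  have q2: "- b - c' 0 m + a = b + c' m 0 - a" using X1m Ym1 kpos L0 by simp
  have q3: "- b + c' 0 m + a = b - c' m 0 - a" using Xm1 Y1m kpos L0 by simp
  have q4: "- b - c' 0 m - a = b - c' m 0 + a" using Xmm Ymm kpos L0 by simp
  have a0: "a = 0" and b0: "b = 0" and C0: "c' 0 m = 0" and Cm: "c' m 0 = 0"
    using q1 q2 q3 q4 by linarith+
  have vev: "v (x, y) = ev m c' x y" for x y using vV[of x y] a0 b0 by (simp add: VV_def)
  have z1: "\<forall>y. ev m c' 1 y = 0" using EX(3)[OF vX1] a0 b0 C0 by (simp add: VV_def)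
  have z2: "\<forall>y. ev m c' (-1) y = 0" using EX(3)[OF vXm] a0 b0 C0 by (simp add: VV_def)
  have z3: "\<forall>x. ev m c' x 1 = 0"
  proof
    fix x
    have "VV m cT (-a) (-b) 1 x = 0" using EY(3)[OF vY1] a0 b0 cT0 Cm by simp
    then show "ev m c' x 1 = 0" using swp[of x 1] a0 b0 by (simp add: VV_def)
  qed
  have z4: "\<forall>x. ev m c' x (-1) = 0"
  proof
    fix x
    have "VV m cT (-a) (-b) (-1) x = 0" using EY(3)[OF vYm] a0 b0 cT0 Cm by simp
    then show "ev m c' x (-1) = 0" using swp[of x "-1"] a0 b0 by (simp add: VV_def)
  qed
  obtain d where dsup: "\<forall>i j. d i j \<noteq> 0 \<longrightarrow> i + j + 4 \<le> m"
    and dd: "\<forall>x y. ev m c' x y = (1 - x^2) * (1 - y^2) * ev m d x y"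
    using bdiv[OF csup z1 z2 z3 z4] by blast
  show ?thesis
  proof (cases "k \<le> 1")
    case True
    then have "d i j = 0" for i j using dsup unfolding m_def by fastforce
    then have "ev m d x y = 0" for x y unfolding ev_def by simp
    then show ?thesis using vev dd by simp
  next
    case False
    then have k2: "k \<ge> 2" by simp
    define N where "N = 2 * k - 3"
    have Nm: "N \<le> m" unfolding N_def m_def by simp
    define q where "q z = ev m d (fst z) (snd z)" for z
    have dN: "(\<lambda>i j. if i + j \<le> N then d i j else 0) = d"
    proof (intro ext)
      fix i j
      have "d i j \<noteq> 0 \<longrightarrow> i + j + 4 \<le> 2 * k + 1" using dsup unfolding m_def by blast
      then show "(if i + j \<le> N then d i j else 0) = d i j"
        using k2 unfolding N_def by (cases "d i j = 0") auto
    qed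
    have qP: "polyP N q"
      unfolding polyP_def
    proof (intro exI allI)
      fix x y
      show "q (x, y) = (\<Sum>i\<le>N. \<Sum>j\<le>N - i. d i j * x ^ i * y ^ j)"
        using tri_ev[OF Nm, of d x y] dN unfolding q_def by simp
    qed
    have qI: "\<forall>z\<in>I. q z = 0"
    proof
      fix z assume zI: "z \<in> I"
      obtain x y where z: "z = (x, y)" by (cases z)
      have "x \<in> {-1<..<1}" "y \<in> {-1<..<1}" using zI I_int z by auto
      then have nx: "1 - x^2 \<noteq> 0" and ny: "1 - y^2 \<noteq> 0" using nz2 by auto
      have "v (x, y) = 0" using vanish zI z by auto
      then have "(1 - x^2) * (1 - y^2) * ev m d x y = 0" using vev dd by simp
      then show "q z = 0" using nx ny unfolding q_def z by simp
    qed
    have "\<forall>z. q z = 0" using I_unisolvent[OF k2] qP qI unfolding N_def by blast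
    then show ?thesis using vev dd unfolding q_def by (metis fst_conv snd_conv mult_zero_right surj_pair)
  qed
qed

end
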